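(* Let $G=(I_0\cup I_1,E)$ be a bipartite graph with bipartition $(I_0,I_1)$ such that $d(v)\ge 3$ for every $v\in I_1$, and let $d_1,d_2$ be real numbers with $0<d_1<d_2$. Then $G$ admits a proper $\{-d_1,0,d_2\}$-edge weighting.
   Context: All graphs are simple, finite and undirected; $d(v)$ denotes the degree of $v$. For a graph $G=(V,E)$ and a set $Q\subset\mathbb{R}$, a $Q$-edge weighting is a map $w:E\to Q$. The weighted degree of a vertex $v$ is $d_w(v)=\sum_{e\ni v}w(e)$. An edge $uv$ is a conflict if $d_w(u)=d_w(v)$, and $w$ is proper if it has no conflicts. *)

theory Defs
  imports Complex_Main
begin

definition simple_graph :: "'a set \<Rightarrow> 'a set set \<Rightarrow> bool" where
  "simple_graph V E \<longleftrightarrow> finite V \<and> (\<forall>e\<in>E. \<exists>u v. u \<in> V \<and> v \<in> V \<and> u \<noteq> v \<and> e = {u, v})"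

definition degree :: "'a set set \<Rightarrow> 'a \<Rightarrow> nat" where
  "degree E v = card {e \<in> E. v \<in> e}"

definition bipartite_with :: "'a set \<Rightarrow> 'a set \<Rightarrow> 'a set set \<Rightarrow> bool" where
  "bipartite_with I0 I1 E \<longleftrightarrow> simple_graph (I0 \<union> I1) E \<and> I0 \<inter> I1 = {} \<and>
     (\<forall>e\<in>E. \<exists>u v. u \<in> I0 \<and> v \<in> I1 \<and> e = {u, v})"

definition weighted_degree :: "'a set set \<Rightarrow> ('a set \<Rightarrow> real) \<Rightarrow> 'a \<Rightarrow> real" where
  "weighted_degree E w v = (\<Sum>e\<in>{e \<in> E. v \<in> e}. w e)"

definition edge_weighting :: "'a set set \<Rightarrow> real set \<Rightarrow> ('a set \<Rightarrow> real) \<Rightarrow> bool" where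
  "edge_weighting E Q w \<longleftrightarrow> (\<forall>e\<in>E. w e \<in> Q)"

definition proper_weighting :: "'a set set \<Rightarrow> ('a set \<Rightarrow> real) \<Rightarrow> bool" where
  "proper_weighting E w \<longleftrightarrow>
     (\<forall>u v. {u, v} \<in> E \<longrightarrow> u \<noteq> v \<longrightarrow> weighted_degree E w u \<noteq> weighted_degree E w v)"

end

theory Submission
  imports Defs
begin

definition closedE :: "'a set set \<Rightarrow> 'a set \<Rightarrow> bool" where
  "closedE E Z \<longleftrightarrow> (\<forall>e\<in>E. e \<subseteq> Z \<or> e \<inter> Z = {})"

lemma card_sdiff_parity:
  assumes "finite A" "finite B"
  shows "even (card ((A - B) \<union> (B - A))) \<longleftrightarrow> (even (card A) \<longleftrightarrow> even (card B))"
proof -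
  have a: "card A = card (A - B) + card (A \<inter> B)"
  proof -
    have "A = (A - B) \<union> (A \<inter> B)" by blast
    then have "card A = card ((A - B) \<union> (A \<inter> B))" by simp
    also have "\<dots> = card (A - B) + card (A \<inter> B)" using assms by (intro card_Un_disjoint) auto
    finally show ?thesis .
  qed
  have b: "card B = card (B - A) + card (A \<inter> B)"
  proof -
    have "B = (B - A) \<union> (A \<inter> B)" by blast
    then have "card B = card ((B - A) \<union> (A \<inter> B))" by simp
    also have "\<dots> = card (B - A) + card (A \<inter> B)" using assms by (intro card_Un_disjoint) auto
    finally show ?thesis .
  qed
  have c: "card ((A - B) \<union> (B - A)) = card (A - B) + card (B - A)"
    using assms by (intro card_Un_disjoint) auto
  show ?thesis using a b c by presburger
qed

lemma parity_subgraph: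
  assumes "finite E" "\<forall>e\<in>E. \<exists>u v. u \<noteq> v \<and> e = {u,v}"
  shows "finite T \<Longrightarrow> (\<forall>Z. closedE E Z \<longrightarrow> even (card (T \<inter> Z)))
    \<Longrightarrow> \<exists>S\<subseteq>E. \<forall>x. odd (card {e\<in>S. x\<in>e}) \<longleftrightarrow> x \<in> T"
  using assms
proof (induction E arbitrary: T rule: finite_induct)
  case empty
  have "T = {}"
  proof (rule ccontr)
    assume "T \<noteq> {}"
    then obtain x where "x \<in> T" by blast
    have "closedE {} {x}" by (simp add: closedE_def)
    then have "even (card (T \<inter> {x}))" using empty by blast
    moreover have "T \<inter> {x} = {x}" using \<open>x\<in>T\<close> by blast
    ultimately show False by simp
  qed
  then show ?case by auto
next
  case (insert e F)
  obtain u v where uv: "u \<noteq> v" "e = {u,v}" using insert.prems(3) by blast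
  have eF: "\<forall>e\<in>F. \<exists>u v. u \<noteq> v \<and> e = {u,v}" using insert.prems(3) by blast
  show ?case
  proof (cases "\<forall>Z. closedE F Z \<longrightarrow> even (card (T \<inter> Z))")
    case True
    then obtain S where "S \<subseteq> F" "\<forall>x. odd (card {e\<in>S. x\<in>e}) \<longleftrightarrow> x \<in> T"
      using insert.IH[OF insert.prems(1) _ eF] by blast
    then show ?thesis by blast
  next
    case False
    then obtain Z where Z: "closedE F Z" "odd (card (T \<inter> Z))" by blast
    have uvZ: "(u \<in> Z) \<noteq> (v \<in> Z)"
    proof
      assume "(u \<in> Z) = (v \<in> Z)"
      then have "closedE (insert e F) Z" using Z(1) uv unfolding closedE_def by auto
      then show False using insert.prems(2) Z(2) by blast
    qed
    define T' where "T' = (T - {u,v}) \<union> ({u,v} - T)"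
    have finT': "finite T'" using insert.prems(1) unfolding T'_def by auto
    have condT': "\<forall>Z'. closedE F Z' \<longrightarrow> even (card (T' \<inter> Z'))"
    proof (intro allI impI)
      fix Z' assume Z': "closedE F Z'"
      have eqT': "T' \<inter> Z' = ((T \<inter> Z') - ({u,v} \<inter> Z')) \<union> (({u,v} \<inter> Z') - (T \<inter> Z'))"
        unfolding T'_def by auto
      have par: "even (card (T' \<inter> Z')) \<longleftrightarrow> (even (card (T \<inter> Z')) \<longleftrightarrow> even (card ({u,v} \<inter> Z')))"
        unfolding eqT' by (rule card_sdiff_parity) (use insert.prems(1) in auto)
      show "even (card (T' \<inter> Z'))"
      proof (cases "(u \<in> Z') = (v \<in> Z')")
        case True
        then have "closedE (insert e F) Z'" using Z' uv unfolding closedE_def by auto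
        then have "even (card (T \<inter> Z'))" using insert.prems(2) by blast
        moreover have "even (card ({u,v} \<inter> Z'))"
        proof (cases "u \<in> Z'")
          case True
          then have "{u,v} \<inter> Z' = {u,v}" using \<open>(u \<in> Z') = (v \<in> Z')\<close> by auto
          then show ?thesis using uv by simp
        next
          case False
          then have "{u,v} \<inter> Z' = {}" using \<open>(u \<in> Z') = (v \<in> Z')\<close> by auto
          then show ?thesis by simp
        qed
        ultimately show ?thesis using par by blast
      next
        case False
        define W where "W = (Z - Z') \<union> (Z' - Z)"
        have "closedE F W" using Z(1) Z' unfolding closedE_def W_def by blast
        moreover have "(u \<in> W) = (v \<in> W)" using uvZ False unfolding W_def by blast
        ultimately have "closedE (insert e F) W" using uv unfolding closedE_def by auto
        then have evW: "even (card (T \<inter> W))" using insert.prems(2) by blast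
        have "T \<inter> W = ((T \<inter> Z) - (T \<inter> Z')) \<union> ((T \<inter> Z') - (T \<inter> Z))" unfolding W_def by auto
        then have "even (card (T \<inter> W)) \<longleftrightarrow> (even (card (T \<inter> Z)) \<longleftrightarrow> even (card (T \<inter> Z')))"
          using card_sdiff_parity[of "T \<inter> Z" "T \<inter> Z'"] insert.prems(1) by simp
        then have oZ': "odd (card (T \<inter> Z'))" using evW Z(2) by blast
        have "card ({u,v} \<inter> Z') = 1"
        proof (cases "u \<in> Z'")
          case True
          then have "{u,v} \<inter> Z' = {u}" using False by auto
          then show ?thesis by simp
        next
          case f2: False
          then have "{u,v} \<inter> Z' = {v}" using False by auto
          then show ?thesis by simp
        qed
        then show ?thesis using par oZ' by simp
      qed
    qed
    obtain S' where S': "S' \<subseteq> F" "\<forall>x. odd (card {e\<in>S'. x\<in>e}) \<longleftrightarrow> x \<in> T'"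
      using insert.IH[OF finT' condT' eF] by blast
    have "e \<notin> S'" using S'(1) insert.hyps(2) by blast
    have "\<forall>x. odd (card {f\<in>insert e S'. x\<in>f}) \<longleftrightarrow> x \<in> T"
    proof
      fix x
      show "odd (card {f\<in>insert e S'. x\<in>f}) \<longleftrightarrow> x \<in> T"
      proof (cases "x \<in> e")
        case True
        have "{f\<in>insert e S'. x\<in>f} = insert e {f\<in>S'. x\<in>f}" using True by auto
        moreover have "finite {f\<in>S'. x\<in>f}" using finite_subset[OF S'(1) insert.hyps(1)] by simp
        ultimately have "card {f\<in>insert e S'. x\<in>f} = Suc (card {f\<in>S'. x\<in>f})"
          using \<open>e \<notin> S'\<close> by simp
        moreover have "x \<in> T \<longleftrightarrow> x \<notin> T'" using True uv unfolding T'_def by auto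
        ultimately show ?thesis using S'(2) by simp
      next
        case False
        have "{f\<in>insert e S'. x\<in>f} = {f\<in>S'. x\<in>f}" using False by auto
        moreover have "x \<in> T \<longleftrightarrow> x \<in> T'" using False uv unfolding T'_def by auto
        ultimately show ?thesis using S'(2) by simp
      qed
    qed
    moreover have "insert e S' \<subseteq> insert e F" using S'(1) by blast
    ultimately show ?thesis by blast
  qed
qed


lemma exists_R:
  assumes "finite T"
  shows "\<exists>R\<subseteq>T. (\<forall>Z. closedE E Z \<longrightarrow> even (card ((T - R) \<inter> Z))) \<and>
    (\<forall>x r1 r2. r1 \<in> R \<longrightarrow> r2 \<in> R \<longrightarrow> {x,r1} \<in> E \<longrightarrow> {x,r2} \<in> E \<longrightarrow> r1 = r2)"
proof -
  define P where "P R \<longleftrightarrow> R \<subseteq> T \<and> (\<forall>Z. closedE E Z \<longrightarrow> even (card ((T - R) \<inter> Z)))" for R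
  have "P T" unfolding P_def by simp
  then obtain R where PR: "P R" and minR: "\<And>R'. P R' \<Longrightarrow> card R \<le> card R'"
    using ex_has_least_nat[of P T card] by metis
  have RT: "R \<subseteq> T" using PR unfolding P_def by simp
  have Rev: "\<And>Z. closedE E Z \<Longrightarrow> even (card ((T - R) \<inter> Z))" using PR unfolding P_def by simp
  have finR: "finite R" using RT assms by (rule finite_subset)
  have uniq: "r1 = r2" if r: "r1 \<in> R" "r2 \<in> R" "{x,r1} \<in> E" "{x,r2} \<in> E" for x r1 r2
  proof (rule ccontr)
    assume ne: "r1 \<noteq> r2"
    define R' where "R' = R - {r1,r2}"
    have R'T: "R' \<subseteq> T" using RT unfolding R'_def by (rule subset_trans[OF Diff_subset])
    have ev': "even (card ((T - R') \<inter> Z))" if Z: "closedE E Z" for Z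
    proof -
      have c1: "{x,r1} \<subseteq> Z \<or> {x,r1} \<inter> Z = {}" using Z r(3) unfolding closedE_def by (rule bspec)
      have c2: "{x,r2} \<subseteq> Z \<or> {x,r2} \<inter> Z = {}" using Z r(4) unfolding closedE_def by (rule bspec)
      have ev: "even (card ((T - R) \<inter> Z))" using Rev[OF Z] .
      have eq: "(T - R') \<inter> Z = ((T - R) \<inter> Z) \<union> ({r1,r2} \<inter> Z)"
        unfolding R'_def using r(1,2) RT by auto
      have disj: "((T - R) \<inter> Z) \<inter> ({r1,r2} \<inter> Z) = {}" using r(1,2) by auto
      have c: "card ((T - R') \<inter> Z) = card ((T - R) \<inter> Z) + card ({r1,r2} \<inter> Z)"
        unfolding eq using assms disj by (intro card_Un_disjoint) auto
      have "even (card ({r1,r2} \<inter> Z))"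
      proof (cases "x \<in> Z")
        case True
        then have "{r1,r2} \<inter> Z = {r1,r2}" using c1 c2 by auto
        then show ?thesis using ne by simp
      next
        case False
        then have "{r1,r2} \<inter> Z = {}" using c1 c2 by auto
        then show ?thesis by simp
      qed
      then show ?thesis using c ev by simp
    qed
    have "P R'" unfolding P_def using R'T ev' by blast
    then have "card R \<le> card R'" by (rule minR)
    moreover have "card R' < card R"
    proof -
      have sub: "{r1,r2} \<subseteq> R" using r(1,2) by blast
      have "card R' = card R - card {r1,r2}" unfolding R'_def using finR sub by (simp add: card_Diff_subset)
      moreover have "card {r1,r2} \<le> card R" using finR sub by (rule card_mono)
      moreover have "card {r1,r2} = 2" using ne by simp
      ultimately show ?thesis by simp
    qed
    ultimately show False by simp
  qed
  show ?thesis using RT Rev uniq by blast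
qed

lemma sum_if3:
  assumes "finite A"
  shows "(\<Sum>e\<in>A. if P e then (a::real) else if Q e then b else 0)
    = a * card {e\<in>A. P e} + b * card {e\<in>A. \<not> P e \<and> Q e}"
proof -
  have "(\<Sum>e\<in>A. if P e then (a::real) else if Q e then b else 0)
      = (\<Sum>e\<in>A. (if P e then a else 0) + (if \<not> P e \<and> Q e then b else 0))"
    by (rule sum.cong) auto
  also have "\<dots> = (\<Sum>e\<in>A. if P e then a else 0) + (\<Sum>e\<in>A. if \<not> P e \<and> Q e then b else 0)"
    by (rule sum.distrib)
  also have "(\<Sum>e\<in>A. if P e then a else 0) = (\<Sum>e\<in>{e\<in>A. P e}. a)"
    using sum.inter_filter[OF assms, of "\<lambda>_. a" P] by simp
  also have "(\<Sum>e\<in>A. if \<not> P e \<and> Q e then b else 0) = (\<Sum>e\<in>{e\<in>A. \<not> P e \<and> Q e}. b)"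
    using sum.inter_filter[OF assms, of "\<lambda>_. b" "\<lambda>e. \<not> P e \<and> Q e"] by simp
  finally show ?thesis by (simp add: mult.commute)
qed


theorem lemma2p3:
  fixes I0 I1 :: "'a set" and E :: "'a set set" and d1 d2 :: real
  assumes "bipartite_with I0 I1 E"
    and "\<forall>v\<in>I1. degree E v \<ge> 3"
    and "0 < d1" and "d1 < d2"
  shows "\<exists>w. edge_weighting E {-d1, 0, d2} w \<and> proper_weighting E w"
proof -
  from assms(1) have sg: "simple_graph (I0 \<union> I1) E" and disj: "I0 \<inter> I1 = {}"
    and bip: "\<forall>e\<in>E. \<exists>u v. u \<in> I0 \<and> v \<in> I1 \<and> e = {u, v}"
    unfolding bipartite_with_def by auto
  from sg have finV: "finite (I0 \<union> I1)"
    and edges: "\<forall>e\<in>E. \<exists>u v. u \<in> I0 \<union> I1 \<and> v \<in> I0 \<union> I1 \<and> u \<noteq> v \<and> e = {u, v}"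
    unfolding simple_graph_def by auto
  have "E \<subseteq> Pow (I0 \<union> I1)" using edges by auto
  then have finE: "finite E" using finV by (meson finite_Pow_iff finite_subset)
  have finI1: "finite I1" using finV by simp
  obtain R where RT: "R \<subseteq> I1" and Rc: "\<forall>Z. closedE E Z \<longrightarrow> even (card ((I1 - R) \<inter> Z))"
    and Ru: "\<forall>x r1 r2. r1 \<in> R \<longrightarrow> r2 \<in> R \<longrightarrow> {x,r1} \<in> E \<longrightarrow> {x,r2} \<in> E \<longrightarrow> r1 = r2"
    using exists_R[OF finI1, of E] by blast
  have e2: "\<forall>e\<in>E. \<exists>u v. u \<noteq> v \<and> e = {u,v}" using edges by blast
  have finT: "finite (I1 - R)" using finI1 by simp
  obtain S where SE: "S \<subseteq> E" and Sodd: "\<forall>x. odd (card {e\<in>S. x\<in>e}) \<longleftrightarrow> x \<in> I1 - R"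
    using parity_subgraph[OF finE e2 finT Rc] by blast
  define w where "w e = (if e \<inter> R \<noteq> {} then -d1 else if e \<in> S then d2 else 0)" for e
  have ew: "edge_weighting E {-d1, 0, d2} w" unfolding edge_weighting_def w_def by auto
  define K where "K y = card {e\<in>E. y \<in> e \<and> e \<inter> R \<noteq> {}}" for y
  define M where "M y = card {e\<in>E. y \<in> e \<and> e \<inter> R = {} \<and> e \<in> S}" for y
  have wd: "weighted_degree E w y = - d1 * K y + d2 * M y" for y
  proof -
    have fin: "finite {e\<in>E. y \<in> e}" using finE by simp
    have "weighted_degree E w y = -d1 * card {e\<in>{e\<in>E. y \<in> e}. e \<inter> R \<noteq> {}}
        + d2 * card {e\<in>{e\<in>E. y \<in> e}. \<not> e \<inter> R \<noteq> {} \<and> e \<in> S}"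
      unfolding weighted_degree_def w_def by (rule sum_if3[OF fin])
    moreover have "{e\<in>{e\<in>E. y \<in> e}. e \<inter> R \<noteq> {}} = {e\<in>E. y \<in> e \<and> e \<inter> R \<noteq> {}}" by auto
    moreover have "{e\<in>{e\<in>E. y \<in> e}. \<not> e \<inter> R \<noteq> {} \<and> e \<in> S} = {e\<in>E. y \<in> e \<and> e \<inter> R = {} \<and> e \<in> S}" by auto
    ultimately show ?thesis unfolding K_def M_def by simp
  qed
  have R_case: "weighted_degree E w b = - d1 * degree E b" if "b \<in> R" for b
  proof -
    have "{e\<in>E. b \<in> e \<and> e \<inter> R \<noteq> {}} = {e\<in>E. b \<in> e}" using that by auto
    then have k: "K b = degree E b" unfolding K_def degree_def by simp
    have e0: "{e\<in>E. b \<in> e \<and> e \<inter> R = {} \<and> e \<in> S} = {}" using that by auto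
    have m: "M b = 0" unfolding M_def e0 by simp
    show ?thesis using wd[of b] k m by simp
  qed
  have N_case: "weighted_degree E w b = d2 * card {e\<in>S. b\<in>e} \<and> odd (card {e\<in>S. b\<in>e})"
    if "b \<in> I1" "b \<notin> R" for b
  proof -
    have noR: "e \<inter> R = {}" if "e \<in> E" "b \<in> e" for e
    proof -
      obtain x y where xy: "x \<in> I0" "y \<in> I1" "e = {x,y}" using bip \<open>e \<in> E\<close> by blast
      have "x \<notin> R" using xy(1) RT disj by blast
      moreover have "y = b" using xy \<open>b \<in> e\<close> \<open>b \<in> I1\<close> disj by blast
      ultimately show ?thesis using xy(3) \<open>b \<notin> R\<close> by blast
    qed
    have e0: "{e\<in>E. b \<in> e \<and> e \<inter> R \<noteq> {}} = {}" using noR by blast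
    have k: "K b = 0" unfolding K_def e0 by simp
    have e1: "{e\<in>E. b \<in> e \<and> e \<inter> R = {} \<and> e \<in> S} = {e\<in>S. b\<in>e}" using noR SE by blast
    have m: "M b = card {e\<in>S. b\<in>e}" unfolding M_def e1 by simp
    show ?thesis using wd[of b] Sodd that k m by simp
  qed
  have I0_case: "K a \<le> 1 \<and> (K a = 0 \<longrightarrow> even (M a))" if "a \<in> I0" for a
  proof
    have fin: "finite {e\<in>E. a \<in> e \<and> e \<inter> R \<noteq> {}}" using finE by simp
    have "\<forall>e1\<in>{e\<in>E. a \<in> e \<and> e \<inter> R \<noteq> {}}. \<forall>e2\<in>{e\<in>E. a \<in> e \<and> e \<inter> R \<noteq> {}}. e1 = e2"
    proof (intro ballI)
      fix e1 e2 assume e1: "e1 \<in> {e\<in>E. a \<in> e \<and> e \<inter> R \<noteq> {}}" and e2: "e2 \<in> {e\<in>E. a \<in> e \<and> e \<inter> R \<noteq> {}}"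
      obtain x1 y1 where xy1: "x1 \<in> I0" "y1 \<in> I1" "e1 = {x1,y1}" using bip e1 by blast
      obtain x2 y2 where xy2: "x2 \<in> I0" "y2 \<in> I1" "e2 = {x2,y2}" using bip e2 by blast
      have "x1 = a" using xy1 e1 that disj by blast
      moreover have "x2 = a" using xy2 e2 that disj by blast
      moreover have "y1 \<in> R" using xy1 e1 RT disj by blast
      moreover have "y2 \<in> R" using xy2 e2 RT disj by blast
      ultimately have "y1 = y2" using Ru e1 e2 xy1(3) xy2(3) by blast
      then show "e1 = e2" using xy1 xy2 \<open>x1 = a\<close> \<open>x2 = a\<close> by simp
    qed
    then show "K a \<le> 1" unfolding K_def using card_le_Suc0_iff_eq[OF fin] by simp
    show "K a = 0 \<longrightarrow> even (M a)"
    proof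
      assume "K a = 0"
      then have "{e\<in>E. a \<in> e \<and> e \<inter> R \<noteq> {}} = {}" unfolding K_def using fin by simp
      then have e1: "{e\<in>E. a \<in> e \<and> e \<inter> R = {} \<and> e \<in> S} = {e\<in>S. a\<in>e}" using SE by blast
      have "a \<notin> I1 - R" using that disj by blast
      then have "even (card {e\<in>S. a\<in>e})" using Sodd by blast
      then show "even (M a)" unfolding M_def e1 .
    qed
  qed
  have d2pos: "0 < d2" using assms(3,4) by simp
  have key: "weighted_degree E w a \<noteq> weighted_degree E w b" if aI0: "a \<in> I0" and bI1: "b \<in> I1" for a b
  proof (cases "b \<in> R")
    case True
    have D: "real (degree E b) \<ge> 3" using assms(2) bI1 by simp
    have "d1 * 3 \<le> d1 * real (degree E b)" using D assms(3) by (intro mult_left_mono) auto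
    then have lb: "weighted_degree E w b \<le> - 3 * d1" using R_case[OF True] by simp
    have "real (K a) \<le> 1" using I0_case[OF aI0] by simp
    then have "d1 * real (K a) \<le> d1" using assms(3) by (simp add: mult_left_le)
    moreover have "0 \<le> d2 * real (M a)" using d2pos by simp
    ultimately have "weighted_degree E w a \<ge> - d1" using wd[of a] by simp
    then show ?thesis using lb assms(3) by simp
  next
    case False
    obtain c :: nat where wb: "weighted_degree E w b = d2 * c" and oc: "odd c"
      using N_case[OF bI1 False] by blast
    show ?thesis
    proof (cases "K a = 0")
      case True
      then have wa: "weighted_degree E w a = d2 * M a" and em: "even (M a)"
        using wd[of a] I0_case[OF aI0] by simp_all
      have "M a \<noteq> c" using em oc by blast
      then have "real (M a) \<noteq> real c" by simp
      then show ?thesis using wa wb d2pos by simp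
    next
      case False
      then have "K a = 1" using I0_case[OF aI0] by simp
      then have wa: "weighted_degree E w a = - d1 + d2 * M a" using wd[of a] by simp
      show ?thesis
      proof (cases "M a \<le> c")
        case True
        then have "d2 * M a \<le> d2 * c" using d2pos by simp
        then show ?thesis using wa wb assms(3) by simp
      next
        case False
        then have "real c + 1 \<le> real (M a)" by simp
        then have "d2 * (real c + 1) \<le> d2 * M a" using d2pos by (intro mult_left_mono) auto
        then show ?thesis using wa wb assms(4) by (simp add: algebra_simps)
      qed
    qed
  qed
  have "proper_weighting E w"
    unfolding proper_weighting_def
  proof (intro allI impI)
    fix u v assume uv: "{u,v} \<in> E" "u \<noteq> v"
    obtain a b where ab: "a \<in> I0" "b \<in> I1" "{u,v} = {a,b}" using bip uv(1) by blast
    then have "(u = a \<and> v = b) \<or> (u = b \<and> v = a)" by (metis doubleton_eq_iff)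
    then show "weighted_degree E w u \<noteq> weighted_degree E w v" using key[OF ab(1,2)] by auto
  qed
  then show ?thesis using ew by blast
qed

end
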